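(* Let $n\ge 2$ and let $O_n$ be the Cuntz algebra generated by isometries $S_1,\dots,S_n$ with $\sum_{i=1}^n S_iS_i^* = 1$. Let $\phi_n$ be the unique state on $O_n$ with $\phi_n(ab)=\phi_n(ba)$ for all $a\in O_n$, $b\in F_n$. Let $\Phi_n(x)=\sum_{i=1}^n S_i x S_i^*$ and $\Psi_n(x) = \frac1n\sum_{i=1}^n S_i^* x S_i$ for $x\in O_n$. Then (i) $\phi_n\circ\Phi_n = \phi_n$; and (ii) $\Psi_n$ is the adjoint of $\Phi_n$ with respect to $\phi_n$, i.e. $\phi_n(y^*\Phi_n(x)) = \phi_n(\Psi_n(y)^* x)$ for all $x,y\in O_n$.
   Context: For a multi-index $\mu=(\mu_1,\dots,\mu_k)\in\{1,\dots,n\}^k$, $S_\mu = S_{\mu_1}\cdots S_{\mu_k}$ ($S_\emptyset=1$). $F_n$ is the norm closure of the span of all $S_\mu S_\nu^*$ with $|\mu|=|\nu|$ (the canonical UHF subalgebra of type $n^\infty$). The state $\phi_n$ extending the unique trace of $F_n$ with the stated property exists and is unique. *)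

theory Defs
  imports "HOL-Analysis.Analysis"
begin

text \<open>Unital C*-algebras, axiomatised as a type class: a unital real Banach algebra
  carrying a compatible complex scalar multiplication and an involution satisfying
  the C*-identity.\<close>

class cstar_algebra = real_normed_algebra_1 + banach +
  fixes cscale :: "complex \<Rightarrow> 'a \<Rightarrow> 'a"
    and adj :: "'a \<Rightarrow> 'a"
  assumes cscale_add_right: "cscale c (x + y) = cscale c x + cscale c y"
    and cscale_add_left: "cscale (c + d) x = cscale c x + cscale d x"
    and cscale_cscale: "cscale c (cscale d x) = cscale (c * d) x"
    and cscale_of_real: "cscale (complex_of_real r) x = scaleR r x"
    and cscale_mult_left: "cscale c x * y = cscale c (x * y)"
    and cscale_mult_right: "x * cscale c y = cscale c (x * y)"
    and norm_cscale: "norm (cscale c x) = cmod c * norm x"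
    and adj_adj: "adj (adj x) = x"
    and adj_add: "adj (x + y) = adj x + adj y"
    and adj_mult: "adj (x * y) = adj y * adj x"
    and adj_cscale: "adj (cscale c x) = cscale (cnj c) (adj x)"
    and cstar_identity: "norm (adj x * x) = (norm x)\<^sup>2"

definition complex_span :: "'a::cstar_algebra set \<Rightarrow> 'a set" where
  "complex_span B = {(\<Sum>k<(m::nat). cscale (c k) (b k)) | m c b. \<forall>k<m. b k \<in> B}"

definition cstar_gen :: "'a::cstar_algebra set \<Rightarrow> 'a set" where
  "cstar_gen G = \<Inter> {B. G \<subseteq> B \<and> 1 \<in> B \<and> closed B
      \<and> (\<forall>x\<in>B. \<forall>y\<in>B. x + y \<in> B \<and> x * y \<in> B)
      \<and> (\<forall>c. \<forall>x\<in>B. cscale c x \<in> B) \<and> (\<forall>x\<in>B. adj x \<in> B)}"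

definition word :: "(nat \<Rightarrow> 'a::cstar_algebra) \<Rightarrow> nat list \<Rightarrow> 'a" where
  "word S \<mu> = foldr (\<lambda>i acc. S i * acc) \<mu> 1"

definition cuntz_alg :: "nat \<Rightarrow> (nat \<Rightarrow> 'a::cstar_algebra) \<Rightarrow> 'a set" where
  "cuntz_alg n S = cstar_gen (S ` {1..n})"

definition uhf_alg :: "nat \<Rightarrow> (nat \<Rightarrow> 'a::cstar_algebra) \<Rightarrow> 'a set" where
  "uhf_alg n S = closure (complex_span {word S \<mu> * adj (word S \<nu>) | \<mu> \<nu>.
      length \<mu> = length \<nu> \<and> set \<mu> \<subseteq> {1..n} \<and> set \<nu> \<subseteq> {1..n}})"

definition cuntz_family :: "nat \<Rightarrow> (nat \<Rightarrow> 'a::cstar_algebra) \<Rightarrow> bool" where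
  "cuntz_family n S \<longleftrightarrow> (\<forall>i\<in>{1..n}. adj (S i) * S i = 1)
      \<and> (\<Sum>i=1..n. S i * adj (S i)) = 1"

definition is_state_on :: "'a::cstar_algebra set \<Rightarrow> ('a \<Rightarrow> complex) \<Rightarrow> bool" where
  "is_state_on A \<phi> \<longleftrightarrow>
     (\<forall>x\<in>A. \<forall>y\<in>A. \<phi> (x + y) = \<phi> x + \<phi> y)
   \<and> (\<forall>c. \<forall>x\<in>A. \<phi> (cscale c x) = c * \<phi> x)
   \<and> (\<forall>x\<in>A. Im (\<phi> (adj x * x)) = 0 \<and> 0 \<le> Re (\<phi> (adj x * x)))
   \<and> \<phi> 1 = 1"

definition Phi_map :: "nat \<Rightarrow> (nat \<Rightarrow> 'a::cstar_algebra) \<Rightarrow> 'a \<Rightarrow> 'a" where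
  "Phi_map n S x = (\<Sum>i=1..n. S i * x * adj (S i))"

definition Psi_map :: "nat \<Rightarrow> (nat \<Rightarrow> 'a::cstar_algebra) \<Rightarrow> 'a \<Rightarrow> 'a" where
  "Psi_map n S x = cscale (1 / of_nat n) (\<Sum>i=1..n. adj (S i) * x * S i)"

end

theory Submission
  imports Defs "HOL-Computational_Algebra.Formal_Power_Series"
begin



lemma cscale_one[simp]: "cscale 1 (x::'a::cstar_algebra) = x"
  using cscale_of_real[of 1 x] by simp

lemma cscale_zero_right[simp]: "cscale c (0::'a::cstar_algebra) = 0"
  using cscale_add_right[of c 0 0] by simp

lemma cscale_minus_one: "cscale (-1) (x::'a::cstar_algebra) = - x"
  using cscale_of_real[of "-1" x] by simp

lemma cscale_real: "cscale (complex_of_real r) (x::'a::cstar_algebra) = r *\<^sub>R x"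
  by (rule cscale_of_real)

lemma adj_zero[simp]: "adj (0::'a::cstar_algebra) = 0"
  using adj_add[of "0::'a" 0] by simp

lemma adj_one[simp]: "adj (1::'a::cstar_algebra) = 1"
proof -
  have "adj (1::'a) = adj 1 * adj (adj 1)" by (simp only: adj_adj mult_1_right)
  also have "\<dots> = adj (adj 1 * 1)" by (simp only: adj_mult)
  also have "\<dots> = 1" by (simp add: adj_adj)
  finally show ?thesis .
qed

lemma adj_minus[simp]: "adj (- x) = - adj (x::'a::cstar_algebra)"
  using adj_add[of x "-x"] by (metis adj_zero add.right_inverse minus_unique)

lemma adj_diff: "adj (x - y) = adj x - adj (y::'a::cstar_algebra)"
  by (metis adj_add adj_minus diff_conv_add_uminus)

lemma adj_scaleR: "adj (r *\<^sub>R x) = r *\<^sub>R adj (x::'a::cstar_algebra)"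
  by (metis adj_cscale cscale_of_real complex_cnj_complex_of_real)

lemma adj_sum: "adj (sum f A) = (\<Sum>i\<in>A. adj (f i :: 'a::cstar_algebra))"
  by (induction A rule: infinite_finite_induct) (auto simp: adj_add)

lemma adj_power: "adj ((x::'a::cstar_algebra) ^ m) = adj x ^ m"
proof (induction m)
  case (Suc m)
  have "adj (x ^ Suc m) = adj (x^m) * adj x" by (simp add: adj_mult)
  also have "\<dots> = adj x ^ Suc m" using Suc by (simp add: power_commutes)
  finally show ?case .
qed simp

lemma norm_adj_le: "norm (x::'a::cstar_algebra) \<le> norm (adj x)"
proof (cases "x = 0")
  case False
  have "(norm x)^2 = norm (adj x * x)" by (simp add: cstar_identity)
  also have "\<dots> \<le> norm (adj x) * norm x" by (rule norm_mult_ineq)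
  finally have "norm x * norm x \<le> norm (adj x) * norm x" by (simp add: power2_eq_square)
  then show ?thesis using False by simp
qed simp

lemma norm_adj[simp]: "norm (adj (x::'a::cstar_algebra)) = norm x"
  using norm_adj_le[of x] norm_adj_le[of "adj x"] by (simp add: adj_adj)

lemma isometry_norm: "adj s * s = 1 \<Longrightarrow> norm (s::'a::cstar_algebra) = 1"
  using cstar_identity[of s] norm_ge_zero[of s] by (auto simp: power2_eq_1_iff)

lemma adj_lipschitz: "norm (adj x - adj y) = norm (x - (y::'a::cstar_algebra))"
  by (metis adj_diff norm_adj)

lemma continuous_adj: "continuous_on A (adj :: 'a::cstar_algebra \<Rightarrow> 'a)"
  unfolding continuous_on_iff dist_norm adj_lipschitz
  by fastforce





definition subalg :: "'a::cstar_algebra set \<Rightarrow> bool" where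
  "subalg A \<longleftrightarrow> 1 \<in> A \<and> (\<forall>x\<in>A. \<forall>y\<in>A. x + y \<in> A \<and> x * y \<in> A)
     \<and> (\<forall>c. \<forall>x\<in>A. cscale c x \<in> A) \<and> (\<forall>x\<in>A. adj x \<in> A)"

definition posfun :: "'a::cstar_algebra set \<Rightarrow> ('a \<Rightarrow> complex) \<Rightarrow> bool" where
  "posfun A \<omega> \<longleftrightarrow> (\<forall>x\<in>A. \<forall>y\<in>A. \<omega> (x + y) = \<omega> x + \<omega> y)
   \<and> (\<forall>c. \<forall>x\<in>A. \<omega> (cscale c x) = c * \<omega> x)
   \<and> (\<forall>x\<in>A. Im (\<omega> (adj x * x)) = 0 \<and> 0 \<le> Re (\<omega> (adj x * x)))"

lemma subalgD:
  assumes "subalg A"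
  shows "1 \<in> A" "x \<in> A \<Longrightarrow> y \<in> A \<Longrightarrow> x + y \<in> A" "x \<in> A \<Longrightarrow> y \<in> A \<Longrightarrow> x * y \<in> A"
    "x \<in> A \<Longrightarrow> cscale c x \<in> A" "x \<in> A \<Longrightarrow> adj x \<in> A"
  using assms unfolding subalg_def by auto

lemma subalg_zero: "subalg A \<Longrightarrow> 0 \<in> A"
  using subalgD(4)[of A 1 0] subalgD(1)[of A] cscale_of_real[of 0 "1::'a"] by auto

lemma subalg_minus: "subalg A \<Longrightarrow> x \<in> A \<Longrightarrow> - x \<in> A"
  using subalgD(4)[of A x "-1"] by (simp add: cscale_minus_one)

lemma subalg_diff: assumes "subalg A" "x \<in> A" "y \<in> A" shows "x - y \<in> A"
proof -
  have "x + - y \<in> A" by (rule subalgD(2)[OF assms(1,2) subalg_minus[OF assms(1,3)]])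
  then show ?thesis by simp
qed

lemma subalg_scaleR: "subalg A \<Longrightarrow> x \<in> A \<Longrightarrow> r *\<^sub>R x \<in> A"
  using subalgD(4)[of A x "complex_of_real r"] by (simp add: cscale_of_real)

lemma subalg_sum: "subalg A \<Longrightarrow> (\<And>i. i \<in> I \<Longrightarrow> f i \<in> A) \<Longrightarrow> sum f I \<in> A"
  by (induction I rule: infinite_finite_induct) (auto simp: subalg_zero subalgD(2))

lemma subalg_power: "subalg A \<Longrightarrow> x \<in> A \<Longrightarrow> x ^ m \<in> A"
  by (induction m) (auto simp: subalgD(1,3))

lemma posfunD:
  assumes "posfun A \<omega>"
  shows "x \<in> A \<Longrightarrow> y \<in> A \<Longrightarrow> \<omega> (x + y) = \<omega> x + \<omega> y"
    "x \<in> A \<Longrightarrow> \<omega> (cscale c x) = c * \<omega> x"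
    "x \<in> A \<Longrightarrow> Im (\<omega> (adj x * x)) = 0"
    "x \<in> A \<Longrightarrow> 0 \<le> Re (\<omega> (adj x * x))"
  using assms unfolding posfun_def by auto

lemma posfun_zero: "posfun A \<omega> \<Longrightarrow> subalg A \<Longrightarrow> \<omega> 0 = 0"
  using posfunD(2)[of A \<omega> 0 0] subalg_zero[of A] by simp

lemma posfun_minus: "posfun A \<omega> \<Longrightarrow> x \<in> A \<Longrightarrow> \<omega> (- x) = - \<omega> x"
  using posfunD(2)[of A \<omega> x "-1"] by (simp add: cscale_minus_one)

lemma posfun_diff: assumes "posfun A \<omega>" "subalg A" "x \<in> A" "y \<in> A" shows "\<omega> (x - y) = \<omega> x - \<omega> y"
proof -
  have "\<omega> (x + - y) = \<omega> x + \<omega> (- y)" by (rule posfunD(1)[OF assms(1,3) subalg_minus[OF assms(2,4)]])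
  then show ?thesis using posfun_minus[OF assms(1,4)] by simp
qed

lemma posfun_scaleR: "posfun A \<omega> \<Longrightarrow> x \<in> A \<Longrightarrow> \<omega> (r *\<^sub>R x) = of_real r * \<omega> x"
  using posfunD(2)[of A \<omega> x "complex_of_real r"] by (simp add: cscale_of_real)

lemma posfun_sum: "posfun A \<omega> \<Longrightarrow> subalg A \<Longrightarrow> (\<And>i. i \<in> I \<Longrightarrow> f i \<in> A) \<Longrightarrow> \<omega> (sum f I) = (\<Sum>i\<in>I. \<omega> (f i))"
proof (induction I rule: infinite_finite_induct)
  case (insert x F)
  then show ?case by (simp add: posfunD(1) subalg_sum)
qed (auto simp: posfun_zero)


lemma expand_sq:
  "adj (v + cscale t u) * (v + cscale t u) =
     adj v * v + cscale t (adj v * u) + cscale (cnj t) (adj u * v) + cscale (cnj t * t) (adj u * (u::'a::cstar_algebra))"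
proof -
  have "adj (v + cscale t u) = adj v + cscale (cnj t) (adj u)" by (simp add: adj_add adj_cscale)
  then have "adj (v + cscale t u) * (v + cscale t u) =
     adj v * v + adj v * cscale t u + (cscale (cnj t) (adj u) * v + cscale (cnj t) (adj u) * cscale t u)"
    by (simp add: distrib_left distrib_right)
  also have "\<dots> = adj v * v + cscale t (adj v * u) + (cscale (cnj t) (adj u * v) + cscale (t * cnj t) (adj u * u))"
    by (simp only: cscale_mult_left cscale_mult_right cscale_cscale)
  also have "t * cnj t = cnj t * t" by (simp only: mult.commute)
  finally show ?thesis by (simp only: add.assoc)
qed

lemma posfun_expand:
  assumes "posfun A \<omega>" "subalg A" "u \<in> A" "v \<in> A"
  shows "\<omega> (adj (v + cscale t u) * (v + cscale t u)) =
     \<omega> (adj v * v) + t * \<omega> (adj v * u) + cnj t * \<omega> (adj u * v) + (cnj t * t) * \<omega> (adj u * u)"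
proof -
  have m: "adj v * v \<in> A" "adj v * u \<in> A" "adj u * v \<in> A" "adj u * u \<in> A"
    using assms by (auto intro!: subalgD(3,5))
  show ?thesis unfolding expand_sq using m assms(2)
    by (simp add: posfunD(1,2)[OF assms(1)] subalgD(2,4))
qed

lemma posfun_real: "posfun A \<omega> \<Longrightarrow> x \<in> A \<Longrightarrow> \<omega> (adj x * x) = of_real (Re (\<omega> (adj x * x)))"
  by (simp add: complex_eq_iff posfunD(3))

lemma posfun_herm:
  assumes "posfun A \<omega>" "subalg A" "b \<in> A"
  shows "\<omega> (adj b) = cnj (\<omega> b)"
proof -
  have one: "(1::'a) \<in> A" using assms(2) by (rule subalgD)
  have i1: "Im (\<omega> 1) = 0" using posfunD(3)[OF assms(1) one] by simp
  have e1: "\<omega> (adj (1 + cscale 1 b) * (1 + cscale 1 b)) =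
     \<omega> 1 + \<omega> b + \<omega> (adj b) + \<omega> (adj b * b)"
    using posfun_expand[OF assms(1,2) assms(3) one, of 1] by simp
  have e2: "\<omega> (adj (1 + cscale \<i> b) * (1 + cscale \<i> b)) =
     \<omega> 1 + \<i> * \<omega> b - \<i> * \<omega> (adj b) + \<omega> (adj b * b)"
    using posfun_expand[OF assms(1,2) assms(3) one, of \<i>] by simp
  have m1: "1 + cscale 1 b \<in> A" "1 + cscale \<i> b \<in> A" using assms one by (auto intro!: subalgD(2,4))
  have "Im (\<omega> (adj (1 + cscale 1 b) * (1 + cscale 1 b))) = 0" by (rule posfunD(3)[OF assms(1) m1(1)])
  then have a: "Im (\<omega> b) + Im (\<omega> (adj b)) = 0"
    using e1 i1 posfunD(3)[OF assms(1) assms(3)] by simp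
  have "Im (\<omega> (adj (1 + cscale \<i> b) * (1 + cscale \<i> b))) = 0" by (rule posfunD(3)[OF assms(1) m1(2)])
  then have c: "Re (\<omega> b) - Re (\<omega> (adj b)) = 0"
    using e2 i1 posfunD(3)[OF assms(1) assms(3)] by simp
  show ?thesis using a c by (simp add: complex_eq_iff)
qed



lemma posfun_cs:
  assumes "posfun A \<omega>" "subalg A" "u \<in> A" "v \<in> A"
  shows "0 \<le> Re (\<omega> (adj v * v)) - 2 * s * (cmod (\<omega> (adj u * v)))^2
     + s^2 * (cmod (\<omega> (adj u * v)))^2 * Re (\<omega> (adj u * u))"
proof -
  define w where "w = \<omega> (adj u * v)"
  define t where "t = - (complex_of_real s * w)"
  have uv: "adj u * v \<in> A" using assms by (auto intro!: subalgD(3,5))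
  have vu: "\<omega> (adj v * u) = cnj w"
    using posfun_herm[OF assms(1,2) uv] by (simp add: w_def adj_mult adj_adj)
  have z: "v + cscale t u \<in> A" using assms by (auto intro!: subalgD(2,4))
  have "0 \<le> Re (\<omega> (adj (v + cscale t u) * (v + cscale t u)))" by (rule posfunD(4)[OF assms(1) z])
  also have "\<omega> (adj (v + cscale t u) * (v + cscale t u)) =
     \<omega> (adj v * v) + t * cnj w + cnj t * w + (cnj t * t) * \<omega> (adj u * u)"
    using posfun_expand[OF assms] vu w_def by simp
  also have "t * cnj w = - of_real (s * (cmod w)^2)"
    using complex_norm_square[of w] by (simp add: t_def mult.assoc del: of_real_power)
  also have "cnj t * w = - of_real (s * (cmod w)^2)"
    using complex_norm_square[of w] by (simp add: t_def mult.commute mult.left_commute del: of_real_power)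
  also have "cnj t * t = of_real (s^2 * (cmod w)^2)"
    using complex_norm_square[of w] by (simp add: t_def power2_eq_square mult.commute mult.left_commute del: of_real_power)
  finally show ?thesis by (simp add: w_def)
qed

lemma posfun_cs_zero:
  assumes "posfun A \<omega>" "subalg A" "u \<in> A" "v \<in> A" "\<omega> (adj v * v) = 0"
  shows "\<omega> (adj u * v) = 0"
proof -
  define a where "a = Re (\<omega> (adj u * u))"
  define r where "r = (cmod (\<omega> (adj u * v)))^2"
  have a0: "0 \<le> a" using posfunD(4)[OF assms(1,3)] by (simp add: a_def)
  define s where "s = 1 / (a + 1)"
  have s0: "0 < s" using a0 by (simp add: s_def)
  have sa: "s * a < 1" using a0 by (simp add: s_def field_simps)
  have "0 \<le> - 2 * s * r + s^2 * r * a"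
    using posfun_cs[OF assms(1-4), of s] assms(5) by (simp add: a_def r_def)
  also have "\<dots> = s * r * (s * a - 2)" by (simp add: power2_eq_square algebra_simps)
  finally have "0 \<le> s * r * (s * a - 2)" .
  moreover have "0 \<le> r" by (simp add: r_def)
  ultimately have "r \<le> 0" using s0 sa
    by (smt (verit, ccfv_SIG) mult_pos_neg mult_pos_pos)
  then show ?thesis using \<open>0 \<le> r\<close> by (simp add: r_def)
qed

lemma posfun_cs_state:
  assumes "posfun A \<omega>" "subalg A" "v \<in> A" "\<omega> 1 = 1"
  shows "(cmod (\<omega> v))^2 \<le> Re (\<omega> (adj v * v))"
  using posfun_cs[OF assms(1,2) subalgD(1)[OF assms(2)] assms(3), of 1] assms(4) by simp





lemma cg_mem_iff: "x \<in> cstar_gen G \<longleftrightarrow> (\<forall>B. G \<subseteq> B \<and> 1 \<in> B \<and> closed B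
      \<and> (\<forall>x\<in>B. \<forall>y\<in>B. x + y \<in> B \<and> x * y \<in> B)
      \<and> (\<forall>c. \<forall>x\<in>B. cscale c x \<in> B) \<and> (\<forall>x\<in>B. adj x \<in> B) \<longrightarrow> x \<in> B)"
  unfolding cstar_gen_def by blast

lemma cg_subalg: "subalg (cstar_gen G)"
  unfolding subalg_def cstar_gen_def by (intro conjI ballI allI) auto

lemma cg_closed: "closed (cstar_gen G)"
  unfolding cstar_gen_def by (rule closed_Inter) blast

lemma cg_gen: "G \<subseteq> cstar_gen G"
  unfolding cstar_gen_def by blast

lemma cg_minimal:
  assumes "G \<subseteq> B" "subalg B" "closed B"
  shows "cstar_gen G \<subseteq> B"
  using assms unfolding subalg_def cstar_gen_def by (intro Inter_lower) auto

lemma bounded_linear_adj: "bounded_linear (adj :: 'a::cstar_algebra \<Rightarrow> 'a)"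
  by (rule bounded_linear_intro[where K=1]) (auto simp: adj_add adj_scaleR)

lemma gbin_half_bound: "\<bar>(1/2::real) gchoose m\<bar> \<le> 1"
proof (induction m)
  case 0
  then show ?case by simp
next
  case (Suc m)
  have "(1/2::real) * ((1/2) gchoose m) = of_nat m * ((1/2) gchoose m) + of_nat (Suc m) * ((1/2) gchoose (Suc m))"
    by (rule gbinomial_mult_1)
  then have e: "(1/2::real) gchoose (Suc m) = (1/2 - real m) / real (Suc m) * ((1/2) gchoose m)"
    by (simp add: field_simps)
  have "\<bar>(1/2 - real m) / real (Suc m)\<bar> \<le> 1" by (simp add: field_simps)
  then have "\<bar>(1/2 - real m) / real (Suc m)\<bar> * \<bar>(1/2::real) gchoose m\<bar> \<le> 1 * 1"
    using Suc by (intro mult_mono) auto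
  then show ?case by (simp add: e abs_mult)
qed

lemma gbin_one: "(1::real) gchoose m = (if m = 0 then 1 else if m = 1 then 1 else 0)"
proof -
  have "(1::real) gchoose m = of_nat (1 choose m)" using binomial_gbinomial[of 1 m, where 'a=real] by simp
  then show ?thesis by (cases m) (auto simp: binomial_eq_0)
qed

lemma sqrt_exists:
  fixes u :: "'a::cstar_algebra"
  assumes A: "subalg A" "closed A" and uA: "u \<in> A" and ua: "adj u = u" and un: "norm u < 1"
  shows "\<exists>k\<in>A. adj k = k \<and> k * k = 1 - u"
proof -
  define c where "c m = (-1)^m * ((1/2::real) gchoose m)" for m
  define f where "f m = c m *\<^sub>R u ^ m" for m
  have cb: "\<bar>c m\<bar> \<le> 1" for m using gbin_half_bound[of m] by (simp add: c_def abs_mult)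
  have nf: "norm (f m) \<le> norm u ^ m" for m
  proof -
    have "norm (f m) = \<bar>c m\<bar> * norm (u ^ m)" by (simp add: f_def)
    also have "\<dots> \<le> 1 * norm u ^ m"
      using cb[of m] norm_power_ineq[of u m] by (intro mult_mono) auto
    finally show ?thesis by simp
  qed
  have sn: "summable (\<lambda>m. norm (f m))"
    by (rule summable_comparison_test[where g="\<lambda>m. norm u ^ m"])
       (use nf un in \<open>auto intro!: summable_geometric\<close>)
  then have sf: "summable f" by (rule summable_norm_cancel)
  define k where "k = suminf f"
  have lim: "(\<lambda>N. \<Sum>m<N. f m) \<longlonglongrightarrow> k" unfolding k_def by (rule summable_LIMSEQ[OF sf])
  have fA: "f m \<in> A" for m unfolding f_def by (intro subalg_scaleR subalg_power A uA)
  have kA: "k \<in> A"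
    by (rule closed_sequentially[OF A(2) _ lim]) (auto intro!: subalg_sum A fA)
  have fa: "adj (f m) = f m" for m by (simp add: f_def adj_scaleR adj_power ua)
  have "(\<lambda>N. adj (\<Sum>m<N. f m)) \<longlonglongrightarrow> adj k"
    by (rule bounded_linear.tendsto[OF bounded_linear_adj lim])
  then have "(\<lambda>N. \<Sum>m<N. f m) \<longlonglongrightarrow> adj k" by (simp add: adj_sum fa)
  then have ka: "adj k = k" using lim LIMSEQ_unique by blast
  have cp: "(\<lambda>m. \<Sum>i\<le>m. f i * f (m - i)) sums (k * k)"
    unfolding k_def by (rule Cauchy_product_sums[OF sn sn])
  have trm: "(\<Sum>i\<le>m. f i * f (m - i)) = ((-1)^m * ((1::real) gchoose m)) *\<^sub>R u ^ m" for m
  proof -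
    have "(\<Sum>i\<le>m. f i * f (m - i)) = (\<Sum>i\<le>m. (c i * c (m - i)) *\<^sub>R u ^ m)"
    proof (rule sum.cong[OF refl])
      fix i assume "i \<in> {..m}"
      then have "u ^ i * u ^ (m - i) = u ^ m" by (simp add: power_add[symmetric])
      then show "f i * f (m - i) = (c i * c (m - i)) *\<^sub>R u ^ m" by (simp add: f_def)
    qed
    also have "\<dots> = (\<Sum>i\<le>m. c i * c (m - i)) *\<^sub>R u ^ m" by (simp add: scaleR_sum_left)
    also have "(\<Sum>i\<le>m. c i * c (m - i)) = (-1)^m * (\<Sum>i\<le>m. ((1/2::real) gchoose i) * ((1/2) gchoose (m - i)))"
      unfolding sum_distrib_left
    proof (rule sum.cong[OF refl])
      fix i assume "i \<in> {..m}"
      then have "(-1::real)^i * (-1)^(m-i) = (-1)^m" by (simp add: power_add[symmetric])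
      then show "c i * c (m - i) = (-1)^m * (((1/2::real) gchoose i) * ((1/2) gchoose (m - i)))"
        unfolding c_def by (metis (no_types, lifting) mult.assoc mult.left_commute)
    qed
    also have "(\<Sum>i\<le>m. ((1/2::real) gchoose i) * ((1/2) gchoose (m - i))) = (1::real) gchoose m"
      using gbinomial_Vandermonde[of "1/2::real" "1/2" m] by (simp add: atLeast0AtMost)
    finally show ?thesis .
  qed
  have "(\<lambda>m. ((-1)^m * ((1::real) gchoose m)) *\<^sub>R u ^ m) sums (1 - u)"
  proof -
    have "(\<lambda>m. ((-1)^m * ((1::real) gchoose m)) *\<^sub>R u ^ m) = (\<lambda>m. if m \<in> {0,1} then ((-1)^m * ((1::real) gchoose m)) *\<^sub>R u ^ m else 0)"
      by (auto simp: gbin_one)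
    moreover have "(\<lambda>m. if m \<in> {0,1} then ((-1)^m * ((1::real) gchoose m)) *\<^sub>R u ^ m else 0) sums
        (\<Sum>m\<in>{0,1}. ((-1)^m * ((1::real) gchoose m)) *\<^sub>R u ^ m)"
      by (rule sums_If_finite_set) simp
    moreover have "(\<Sum>m\<in>{0::nat,1}. ((-1)^m * ((1::real) gchoose m)) *\<^sub>R u ^ m) = 1 - u"
      by simp
    ultimately show ?thesis by simp
  qed
  then have "k * k = 1 - u" using cp unfolding trm by (metis sums_unique2)
  then show ?thesis using kA ka by blast
qed




lemma state_bound:
  assumes A: "subalg A" "closed A" and w: "posfun A \<omega>" "\<omega> 1 = 1" and xA: "x \<in> A"
  shows "cmod (\<omega> x) \<le> norm x"
proof (rule ccontr)
  assume "\<not> cmod (\<omega> x) \<le> norm x"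
  then have lt: "norm x < cmod (\<omega> x)" by simp
  define r where "r = (norm x + cmod (\<omega> x)) / 2"
  have r1: "norm x < r" "r < cmod (\<omega> x)" using lt by (auto simp: r_def)
  then have r0: "0 < r" using norm_ge_zero[of x] by linarith
  define y where "y = (1 / r) *\<^sub>R x"
  have yA: "y \<in> A" unfolding y_def by (rule subalg_scaleR[OF A(1) xA])
  have ny: "norm y < 1" using r1 r0 by (simp add: y_def field_simps)
  define u where "u = adj y * y"
  have uA: "u \<in> A" unfolding u_def using A yA by (auto intro!: subalgD(3,5))
  have ua: "adj u = u" by (simp add: u_def adj_mult adj_adj)
  have nu: "norm u < 1" using ny by (simp add: u_def cstar_identity power_less_one_iff)
  obtain k where kA: "k \<in> A" and ka: "adj k = k" and kk: "k * k = 1 - u"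
    using sqrt_exists[OF A uA ua nu] by blast
  have "0 \<le> Re (\<omega> (adj k * k))" by (rule posfunD(4)[OF w(1) kA])
  also have "\<omega> (adj k * k) = 1 - \<omega> u"
    using ka kk posfun_diff[OF w(1) A(1) subalgD(1)[OF A(1)] uA] w(2) by simp
  finally have "Re (\<omega> u) \<le> 1" by simp
  moreover have "(cmod (\<omega> y))^2 \<le> Re (\<omega> u)"
    unfolding u_def by (rule posfun_cs_state[OF w(1) A(1) yA w(2)])
  ultimately have "(cmod (\<omega> y))^2 \<le> 1" by simp
  then have "cmod (\<omega> y) \<le> 1" by (simp add: power_le_one_iff abs_le_iff power2_le_iff_abs_le)
  moreover have "\<omega> y = complex_of_real (1/r) * \<omega> x" unfolding y_def by (rule posfun_scaleR[OF w(1) xA])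
  then have "cmod (\<omega> y) = cmod (\<omega> x) / r" using r0 by (simp add: norm_mult norm_divide)
  ultimately have "cmod (\<omega> x) / r \<le> 1" by simp
  then show False using r1 r0 by (simp add: field_simps)
qed

lemma state_lipschitz:
  assumes A: "subalg A" "closed A" and w: "posfun A \<omega>" "\<omega> 1 = 1" and xA: "x \<in> A" "y \<in> A"
  shows "cmod (\<omega> x - \<omega> y) \<le> norm (x - y)"
  using state_bound[OF A w subalg_diff[OF A(1) xA]] posfun_diff[OF w(1) A(1) xA] by simp

lemma state_continuous:
  assumes A: "subalg A" "closed A" and w: "posfun A \<omega>" "\<omega> 1 = 1"
  shows "continuous_on A \<omega>"
  unfolding continuous_on_iff dist_norm
proof (intro ballI allI impI)
  fix x e assume x: "x \<in> A" and e: "(0::real) < e"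
  show "\<exists>d>0. \<forall>x'\<in>A. norm (x' - x) < d \<longrightarrow> norm (\<omega> x' - \<omega> x) < e"
    using e state_lipschitz[OF A w _ x] by (metis le_less_trans norm_ge_zero)
qed




lemma word_Nil[simp]: "word S [] = 1" by (simp add: word_def)
lemma word_Cons[simp]: "word S (i # \<mu>) = S i * word S \<mu>" by (simp add: word_def)
lemma word_append: "word S (\<mu> @ \<nu>) = word S \<mu> * word S \<nu>"
  by (induction \<mu>) (simp_all add: mult.assoc)

inductive_set swords :: "nat \<Rightarrow> (nat \<Rightarrow> 'a::cstar_algebra) \<Rightarrow> 'a set" for n S where
  sw_one: "1 \<in> swords n S"
| sw_S: "x \<in> swords n S \<Longrightarrow> i \<in> {1..n} \<Longrightarrow> S i * x \<in> swords n S"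
| sw_Sa: "x \<in> swords n S \<Longrightarrow> i \<in> {1..n} \<Longrightarrow> adj (S i) * x \<in> swords n S"

locale cz =
  fixes n :: nat and S :: "nat \<Rightarrow> 'a::cstar_algebra" and \<phi> :: "'a \<Rightarrow> complex"
  assumes n2: "n \<ge> 2" and fam: "cuntz_family n S" and st: "is_state_on (cuntz_alg n S) \<phi>"
    and tr: "\<forall>a\<in>cuntz_alg n S. \<forall>b\<in>uhf_alg n S. \<phi> (a * b) = \<phi> (b * a)"
begin

abbreviation "A \<equiv> cuntz_alg n S"

lemma subA: "subalg A" unfolding cuntz_alg_def by (rule cg_subalg)
lemma clA: "closed A" unfolding cuntz_alg_def by (rule cg_closed)
lemma SA: "i \<in> {1..n} \<Longrightarrow> S i \<in> A" unfolding cuntz_alg_def by (rule subsetD[OF cg_gen], rule imageI)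
lemma SaA: "i \<in> {1..n} \<Longrightarrow> adj (S i) \<in> A" by (rule subalgD(5)[OF subA SA])
lemma oneA: "1 \<in> A" by (rule subalgD(1)[OF subA])
lemma multA: "x \<in> A \<Longrightarrow> y \<in> A \<Longrightarrow> x * y \<in> A" by (rule subalgD(3)[OF subA])
lemma addA: "x \<in> A \<Longrightarrow> y \<in> A \<Longrightarrow> x + y \<in> A" by (rule subalgD(2)[OF subA])
lemma adjA: "x \<in> A \<Longrightarrow> adj x \<in> A" by (rule subalgD(5)[OF subA])
lemma csA: "x \<in> A \<Longrightarrow> cscale c x \<in> A" by (rule subalgD(4)[OF subA])
lemma zeroA: "0 \<in> A" by (rule subalg_zero[OF subA])

lemma pf: "posfun A \<phi>" using st unfolding is_state_on_def posfun_def by blast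
lemma phi1: "\<phi> 1 = 1" using st unfolding is_state_on_def by blast
lemma phi0: "\<phi> 0 = 0" by (rule posfun_zero[OF pf subA])
lemma phi_add: "x \<in> A \<Longrightarrow> y \<in> A \<Longrightarrow> \<phi> (x + y) = \<phi> x + \<phi> y" by (rule posfunD(1)[OF pf])
lemma phi_cs: "x \<in> A \<Longrightarrow> \<phi> (cscale c x) = c * \<phi> x" by (rule posfunD(2)[OF pf])
lemma phi_herm: "x \<in> A \<Longrightarrow> \<phi> (adj x) = cnj (\<phi> x)" by (rule posfun_herm[OF pf subA])
lemma phi_sum: "(\<And>i. i \<in> I \<Longrightarrow> f i \<in> A) \<Longrightarrow> \<phi> (sum f I) = (\<Sum>i\<in>I. \<phi> (f i))"
  by (rule posfun_sum[OF pf subA])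

lemma iso: "i \<in> {1..n} \<Longrightarrow> adj (S i) * S i = 1" using fam unfolding cuntz_family_def by blast
lemma sumP1: "(\<Sum>i=1..n. S i * adj (S i)) = 1" using fam unfolding cuntz_family_def by blast

lemma wA: "set \<mu> \<subseteq> {1..n} \<Longrightarrow> word S \<mu> \<in> A"
  by (induction \<mu>) (auto intro!: multA SA oneA)

lemma word_iso: "set \<mu> \<subseteq> {1..n} \<Longrightarrow> adj (word S \<mu>) * word S \<mu> = 1"
proof (induction \<mu>)
  case (Cons i \<mu>)
  have "adj (word S (i # \<mu>)) * word S (i # \<mu>) = adj (word S \<mu>) * (adj (S i) * S i) * word S \<mu>"
    by (simp add: adj_mult mult.assoc)
  then show ?case using Cons by (simp add: iso)
qed simp

lemma norm_word: "set \<mu> \<subseteq> {1..n} \<Longrightarrow> norm (word S \<mu>) = 1"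
  by (rule isometry_norm[OF word_iso])

definition eqv :: "'a \<Rightarrow> 'a \<Rightarrow> bool" where
  "eqv x y \<longleftrightarrow> x \<in> A \<and> y \<in> A \<and> (\<forall>a\<in>A. \<forall>b\<in>A. \<phi> (a * x * b) = \<phi> (a * y * b))"

lemma eqv_use: "eqv x y \<Longrightarrow> a \<in> A \<Longrightarrow> b \<in> A \<Longrightarrow> \<phi> (a * x * b) = \<phi> (a * y * b)"
  unfolding eqv_def by blast

lemma eqv_phi: "eqv x y \<Longrightarrow> \<phi> x = \<phi> y"
  using eqv_use[of x y 1 1] oneA by simp

lemma eqv_refl: "x \<in> A \<Longrightarrow> eqv x x" unfolding eqv_def by blast
lemma eqv_sym: "eqv x y \<Longrightarrow> eqv y x" unfolding eqv_def by simp
lemma eqv_trans: "eqv x y \<Longrightarrow> eqv y z \<Longrightarrow> eqv x z" unfolding eqv_def by simp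
lemma eqv_eq_trans: "eqv x y \<Longrightarrow> y = z \<Longrightarrow> eqv x z" by simp
lemma eq_eqv_trans: "x = y \<Longrightarrow> eqv y z \<Longrightarrow> eqv x z" by simp

lemma eqv_mult_left: assumes "c \<in> A" "eqv x y" shows "eqv (c * x) (c * y)"
  unfolding eqv_def
proof (intro conjI ballI)
  show "c * x \<in> A" "c * y \<in> A" using assms multA unfolding eqv_def by auto
  fix a b assume "a \<in> A" "b \<in> A"
  then show "\<phi> (a * (c * x) * b) = \<phi> (a * (c * y) * b)"
    using eqv_use[OF assms(2), of "a * c" b] assms(1) multA by (simp add: mult.assoc)
qed

lemma eqv_mult_right: assumes "c \<in> A" "eqv x y" shows "eqv (x * c) (y * c)"
  unfolding eqv_def
proof (intro conjI ballI)
  show "x * c \<in> A" "y * c \<in> A" using assms multA unfolding eqv_def by auto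
  fix a b assume "a \<in> A" "b \<in> A"
  then show "\<phi> (a * (x * c) * b) = \<phi> (a * (y * c) * b)"
    using eqv_use[OF assms(2), of a "c * b"] assms(1) multA by (simp add: mult.assoc)
qed

lemma eqv_adj: assumes "eqv x y" shows "eqv (adj x) (adj y)"
  unfolding eqv_def
proof (intro conjI ballI)
  have xy: "x \<in> A" "y \<in> A" using assms unfolding eqv_def by auto
  then show "adj x \<in> A" "adj y \<in> A" by (auto intro: adjA)
  fix a b assume ab: "a \<in> A" "b \<in> A"
  have e: "\<phi> z = cnj (\<phi> (adj z))" if "z \<in> A" for z
    using phi_herm[OF adjA[OF that]] by (simp add: adj_adj)
  have "\<phi> (a * adj x * b) = cnj (\<phi> (adj b * x * adj a))"
    using e[of "a * adj x * b"] ab xy by (simp add: adj_mult adj_adj mult.assoc multA adjA)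
  also have "\<phi> (adj b * x * adj a) = \<phi> (adj b * y * adj a)"
    using eqv_use[OF assms] ab by (simp add: adjA)
  also have "cnj (\<phi> (adj b * y * adj a)) = \<phi> (a * adj y * b)"
    using e[of "a * adj y * b"] ab xy by (simp add: adj_mult adj_adj mult.assoc multA adjA)
  finally show "\<phi> (a * adj x * b) = \<phi> (a * adj y * b)" .
qed

lemma kill:
  assumes i: "i \<in> {1..n}" and m: "m \<in> {1..n}" and im: "i \<noteq> m"
  shows "eqv (adj (S i) * S m) 0"
  unfolding eqv_def
proof (intro conjI ballI)
  show "adj (S i) * S m \<in> A" using i m by (intro multA SA SaA)
  show "0 \<in> A" by (rule zeroA)
  fix a b assume a: "a \<in> A" and b: "b \<in> A"
  define z where "z l = adj (S l) * S m" for l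
  define L where "L = {1..n} - {m}"
  have zA: "z l * b \<in> A" if "l \<in> {1..n}" for l using that m b by (auto simp: z_def intro!: multA SA SaA)
  have "S m * adj (S m) + (\<Sum>l\<in>L. S l * adj (S l)) = 1"
    using sum.remove[of "{1..n}" m "\<lambda>l. S l * adj (S l)"] m sumP1 by (simp add: L_def)
  then have sL: "(\<Sum>l\<in>L. S l * adj (S l)) = 1 - S m * adj (S m)" by (metis add_diff_cancel_left')
  have mid: "adj (S m) * (\<Sum>l\<in>L. S l * adj (S l)) * S m = 0"
  proof -
    have "adj (S m) * (1 - S m * adj (S m)) * S m = adj (S m) * S m - (adj (S m) * S m) * (adj (S m) * S m)"
      by (simp add: algebra_simps)
    then show ?thesis using iso[OF m] sL by simp
  qed
  have "(\<Sum>l\<in>L. adj (z l * b) * (z l * b)) = adj b * (adj (S m) * (\<Sum>l\<in>L. S l * adj (S l)) * S m) * b"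
    by (simp add: z_def adj_mult adj_adj sum_distrib_left sum_distrib_right mult.assoc)
  also have "\<dots> = 0" using mid by simp
  finally have s0: "(\<Sum>l\<in>L. adj (z l * b) * (z l * b)) = 0" .
  have "(\<Sum>l\<in>L. \<phi> (adj (z l * b) * (z l * b))) = 0"
    using phi_sum[of L "\<lambda>l. adj (z l * b) * (z l * b)"] s0 phi0 zA by (simp add: L_def multA adjA)
  then have "(\<Sum>l\<in>L. Re (\<phi> (adj (z l * b) * (z l * b)))) = 0"
    by (simp add: Re_sum[symmetric])
  moreover have "\<forall>l\<in>L. 0 \<le> Re (\<phi> (adj (z l * b) * (z l * b)))"
    using posfunD(4)[OF pf] zA by (auto simp: L_def)
  moreover have "finite L" by (simp add: L_def)
  ultimately have "\<forall>l\<in>L. Re (\<phi> (adj (z l * b) * (z l * b))) = 0"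
    using sum_nonneg_eq_0_iff[of L "\<lambda>l. Re (\<phi> (adj (z l * b) * (z l * b)))"] by blast
  then have "Re (\<phi> (adj (z i * b) * (z i * b))) = 0" using i im by (simp add: L_def)
  moreover have "Im (\<phi> (adj (z i * b) * (z i * b))) = 0" using posfunD(3)[OF pf zA[OF i]] .
  ultimately have v0: "\<phi> (adj (z i * b) * (z i * b)) = 0" by (simp add: complex_eq_iff)
  have "\<phi> (adj (adj a) * (z i * b)) = 0"
    by (rule posfun_cs_zero[OF pf subA adjA[OF a] zA[OF i] v0])
  then show "\<phi> (a * (adj (S i) * S m) * b) = \<phi> (a * 0 * b)"
    by (simp add: adj_adj z_def mult.assoc phi0)
qed

lemma word_eqv:
  "set a \<subseteq> {1..n} \<Longrightarrow> set b \<subseteq> {1..n} \<Longrightarrow> length a \<le> length b \<Longrightarrow>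
   eqv (adj (word S a) * word S b) (if take (length a) b = a then word S (drop (length a) b) else 0)"
proof (induction a arbitrary: b)
  case Nil
  then show ?case by (simp add: eqv_refl wA)
next
  case (Cons x a)
  then obtain y b' where b: "b = y # b'" by (cases b) auto
  have x: "x \<in> {1..n}" and y: "y \<in> {1..n}" and a: "set a \<subseteq> {1..n}" and b': "set b' \<subseteq> {1..n}"
    using Cons.prems b by auto
  have len: "length a \<le> length b'" using Cons.prems b by simp
  have e: "adj (word S (x # a)) * word S b = adj (word S a) * ((adj (S x) * S y) * word S b')"
    by (simp add: b adj_mult mult.assoc)
  show ?case
  proof (cases "x = y")
    case True
    have ee: "adj (word S (x # a)) * word S b = adj (word S a) * word S b'"
      using e True iso[OF x] by simp
    have h1: "eqv (adj (word S (x # a)) * word S b) (adj (word S a) * word S b')"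
      unfolding ee by (intro eqv_refl multA adjA wA a b')
    have ifeq: "(if take (length (x # a)) b = x # a then word S (drop (length (x # a)) b) else 0)
        = (if take (length a) b' = a then word S (drop (length a) b') else 0)" by (simp add: b True)
    show ?thesis unfolding ifeq by (rule eqv_trans[OF h1 Cons.IH[OF a b' len]])
  next
    case False
    have "eqv ((adj (S x) * S y) * word S b') (0 * word S b')"
      by (rule eqv_mult_right[OF wA[OF b'] kill[OF x y False]])
    then have "eqv (adj (word S a) * ((adj (S x) * S y) * word S b')) (adj (word S a) * (0 * word S b'))"
      by (rule eqv_mult_left[OF adjA[OF wA[OF a]]])
    then have h0: "eqv (adj (word S (x # a)) * word S b) 0" unfolding e by simp
    have neq: "take (length (x # a)) b \<noteq> x # a" using False b by simp
    show ?thesis using h0 by (simp only: if_not_P[OF neq])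
  qed
qed

lemma swordsA: "x \<in> swords n S \<Longrightarrow> x \<in> A"
  by (induction rule: swords.induct) (auto intro!: oneA multA SA SaA)

lemma swords_nf:
  "x \<in> swords n S \<Longrightarrow> (\<exists>\<mu> \<nu>. set \<mu> \<subseteq> {1..n} \<and> set \<nu> \<subseteq> {1..n} \<and> eqv x (word S \<mu> * adj (word S \<nu>))) \<or> eqv x 0"
proof (induction rule: swords.induct)
  case sw_one
  have "eqv 1 (word S [] * adj (word S []))" by (simp add: eqv_refl oneA)
  then show ?case by (intro disjI1 exI[of _ "[]"] exI[of _ "[]"]) simp
next
  case (sw_S x i)
  from sw_S.IH show ?case
  proof
    assume "\<exists>\<mu> \<nu>. set \<mu> \<subseteq> {1..n} \<and> set \<nu> \<subseteq> {1..n} \<and> eqv x (word S \<mu> * adj (word S \<nu>))"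
    then obtain \<mu> \<nu> where mn: "set \<mu> \<subseteq> {1..n}" "set \<nu> \<subseteq> {1..n}" "eqv x (word S \<mu> * adj (word S \<nu>))" by blast
    have "eqv (S i * x) (S i * (word S \<mu> * adj (word S \<nu>)))" by (rule eqv_mult_left[OF SA[OF sw_S.hyps(2)] mn(3)])
    then have "eqv (S i * x) (word S (i # \<mu>) * adj (word S \<nu>))" by (simp add: mult.assoc)
    then show ?thesis using mn sw_S.hyps(2) by (intro disjI1 exI[of _ "i # \<mu>"] exI[of _ \<nu>]) auto
  next
    assume "eqv x 0"
    then have "eqv (S i * x) (S i * 0)" by (rule eqv_mult_left[OF SA[OF sw_S.hyps(2)]])
    then show ?thesis by simp
  qed
next
  case (sw_Sa x i)
  have i: "i \<in> {1..n}" by fact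
  from sw_Sa.IH show ?case
  proof
    assume "\<exists>\<mu> \<nu>. set \<mu> \<subseteq> {1..n} \<and> set \<nu> \<subseteq> {1..n} \<and> eqv x (word S \<mu> * adj (word S \<nu>))"
    then obtain \<mu> \<nu> where mn: "set \<mu> \<subseteq> {1..n}" "set \<nu> \<subseteq> {1..n}" "eqv x (word S \<mu> * adj (word S \<nu>))" by blast
    have h: "eqv (adj (S i) * x) (adj (S i) * (word S \<mu> * adj (word S \<nu>)))" by (rule eqv_mult_left[OF SaA[OF i] mn(3)])
    show ?thesis
    proof (cases \<mu>)
      case Nil
      have "adj (S i) * (word S \<mu> * adj (word S \<nu>)) = word S [] * adj (word S (\<nu> @ [i]))"
        by (simp add: Nil word_append adj_mult)
      then show ?thesis using h mn i by (intro disjI1 exI[of _ "[]"] exI[of _ "\<nu> @ [i]"]) auto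
    next
      case (Cons m \<mu>')
      have m: "m \<in> {1..n}" and mu': "set \<mu>' \<subseteq> {1..n}" using mn Cons by auto
      have e: "adj (S i) * (word S \<mu> * adj (word S \<nu>)) = (adj (S i) * S m) * (word S \<mu>' * adj (word S \<nu>))"
        by (simp add: Cons mult.assoc)
      show ?thesis
      proof (cases "i = m")
        case True
        have "adj (S i) * (word S \<mu> * adj (word S \<nu>)) = word S \<mu>' * adj (word S \<nu>)"
          using e True iso[OF i] by simp
        then have "eqv (adj (S i) * x) (word S \<mu>' * adj (word S \<nu>))" using h by simp
        then show ?thesis using mu' mn by blast
      next
        case False
        have "eqv ((adj (S i) * S m) * (word S \<mu>' * adj (word S \<nu>))) (0 * (word S \<mu>' * adj (word S \<nu>)))"
          by (rule eqv_mult_right[OF _ kill[OF i m False]]) (use mu' mn in \<open>auto intro!: multA wA adjA\<close>)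
        from eqv_trans[OF h[unfolded e] this] have "eqv (adj (S i) * x) 0" by simp
        then show ?thesis by blast
      qed
    qed
  next
    assume "eqv x 0"
    then have "eqv (adj (S i) * x) (adj (S i) * 0)" by (rule eqv_mult_left[OF SaA[OF i]])
    then show ?thesis by simp
  qed
qed

end



lemma prefix_uniq:
  assumes "r \<noteq> []" "length g1 = length g2"
    "take (length g1) (r @ g1) = g1" "take (length g2) (r @ g2) = g2"
  shows "g1 = g2"
proof -
  have nth: "g ! i = (if i < length r then r ! i else g ! (i - length r))"
    if "i < length g" "take (length g) (r @ g) = g" for g and i
  proof -
    have "g ! i = take (length g) (r @ g) ! i" by (subst that(2)) (rule refl)
    also have "\<dots> = (r @ g) ! i" by (rule nth_take[OF that(1)])
    finally show ?thesis by (simp add: nth_append)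
  qed
  have "\<forall>i. i < length g1 \<longrightarrow> g1 ! i = g2 ! i"
  proof (intro allI)
    fix i show "i < length g1 \<longrightarrow> g1 ! i = g2 ! i"
    proof (induction i rule: less_induct)
      case (less i)
      show ?case
      proof
        assume i: "i < length g1"
        show "g1 ! i = g2 ! i"
        proof (cases "i < length r")
          case True
          then show ?thesis using nth[OF i assms(3)] nth[of i g2] i assms by simp
        next
          case False
          then have lt: "i - length r < i" using assms(1) by (cases r) auto
          have "g1 ! (i - length r) = g2 ! (i - length r)" using less[OF lt] i by simp
          then show ?thesis using nth[OF i assms(3)] nth[of i g2] i assms False by simp
        qed
      qed
    qed
  qed
  then show ?thesis using assms(2) by (simp add: nth_equalityI)
qed

context cz
begin

definition W :: "nat \<Rightarrow> nat list set" where "W N = {xs. set xs \<subseteq> {1..n} \<and> length xs = N}"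
definition P :: "nat list \<Rightarrow> 'a" where "P \<alpha> = word S \<alpha> * adj (word S \<alpha>)"

lemma finW: "finite (W N)" unfolding W_def by (rule finite_lists_length_eq) simp
lemma cardW: "card (W N) = n ^ N" unfolding W_def using card_lists_length_eq[of "{1..n}" N] by simp
lemma npos: "0 < n" using n2 by simp

lemma PA: "set \<alpha> \<subseteq> {1..n} \<Longrightarrow> P \<alpha> \<in> A" unfolding P_def by (intro multA adjA wA)

lemma W_Suc: "W (Suc N) = (\<lambda>(i, \<alpha>). i # \<alpha>) ` ({1..n} \<times> W N)"
  unfolding W_def by (auto simp: length_Suc_conv image_iff)

lemma sumP: "(\<Sum>\<alpha>\<in>W N. P \<alpha>) = 1"
proof (induction N)
  case 0
  have "W 0 = {[]}" unfolding W_def by auto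
  then show ?case by (simp add: P_def)
next
  case (Suc N)
  have inj: "inj_on (\<lambda>(i, \<alpha>). i # \<alpha>) ({1..n} \<times> W N)" by (auto simp: inj_on_def)
  have "(\<Sum>\<alpha>\<in>W (Suc N). P \<alpha>) = (\<Sum>(i, \<alpha>)\<in>{1..n} \<times> W N. P (i # \<alpha>))"
    unfolding W_Suc by (subst sum.reindex[OF inj]) (simp add: case_prod_beta')
  also have "\<dots> = (\<Sum>i\<in>{1..n}. \<Sum>\<alpha>\<in>W N. S i * P \<alpha> * adj (S i))"
    by (subst sum.cartesian_product[symmetric]) (simp add: P_def adj_mult mult.assoc)
  also have "\<dots> = (\<Sum>i\<in>{1..n}. S i * (\<Sum>\<alpha>\<in>W N. P \<alpha>) * adj (S i))"
    by (simp add: sum_distrib_left sum_distrib_right)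
  also have "\<dots> = 1" using Suc sumP1 by simp
  finally show ?case .
qed

lemma uhfI:
  assumes "length \<mu> = length \<nu>" "set \<mu> \<subseteq> {1..n}" "set \<nu> \<subseteq> {1..n}"
  shows "word S \<mu> * adj (word S \<nu>) \<in> uhf_alg n S"
proof -
  let ?x = "word S \<mu> * adj (word S \<nu>)"
  have "?x \<in> complex_span {word S \<mu> * adj (word S \<nu>) | \<mu> \<nu>.
      length \<mu> = length \<nu> \<and> set \<mu> \<subseteq> {1..n} \<and> set \<nu> \<subseteq> {1..n}}"
    unfolding complex_span_def
    by (rule CollectI, rule exI[of _ 1], rule exI[of _ "\<lambda>_. 1"], rule exI[of _ "\<lambda>_. ?x"]) (use assms in auto)
  then show ?thesis unfolding uhf_alg_def using closure_subset by blast
qed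

lemma PU: "set \<alpha> \<subseteq> {1..n} \<Longrightarrow> P \<alpha> \<in> uhf_alg n S" unfolding P_def by (rule uhfI) auto

lemma trace: "a \<in> A \<Longrightarrow> b \<in> uhf_alg n S \<Longrightarrow> \<phi> (a * b) = \<phi> (b * a)" using tr by blast

lemma phiP_eq:
  assumes "\<alpha> \<in> W N" "\<beta> \<in> W N" shows "\<phi> (P \<alpha>) = \<phi> (P \<beta>)"
proof -
  have a: "set \<alpha> \<subseteq> {1..n}" and b: "set \<beta> \<subseteq> {1..n}" and l: "length \<alpha> = length \<beta>"
    using assms by (auto simp: W_def)
  have "\<phi> ((word S \<alpha> * adj (word S \<beta>)) * (word S \<beta> * adj (word S \<alpha>))) =
        \<phi> ((word S \<beta> * adj (word S \<alpha>)) * (word S \<alpha> * adj (word S \<beta>)))"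
    by (rule trace) (use a b l in \<open>auto intro!: multA adjA wA uhfI\<close>)
  moreover have "(word S \<alpha> * adj (word S \<beta>)) * (word S \<beta> * adj (word S \<alpha>)) = P \<alpha>"
    using word_iso[OF b] by (simp add: P_def mult.assoc[symmetric]) (simp add: mult.assoc)
  moreover have "(word S \<beta> * adj (word S \<alpha>)) * (word S \<alpha> * adj (word S \<beta>)) = P \<beta>"
    using word_iso[OF a] by (simp add: P_def mult.assoc[symmetric]) (simp add: mult.assoc)
  ultimately show ?thesis by simp
qed

lemma phiP: assumes "\<alpha> \<in> W N" shows "\<phi> (P \<alpha>) = 1 / of_nat n ^ N"
proof -
  have "1 = \<phi> (\<Sum>\<beta>\<in>W N. P \<beta>)" using sumP phi1 by simp
  also have "\<dots> = (\<Sum>\<beta>\<in>W N. \<phi> (P \<beta>))" by (rule phi_sum, rule PA) (simp add: W_def)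
  also have "\<dots> = (\<Sum>\<beta>\<in>W N. \<phi> (P \<alpha>))" by (rule sum.cong[OF refl], rule phiP_eq[OF _ assms])
  also have "\<dots> = of_nat n ^ N * \<phi> (P \<alpha>)" by (simp add: cardW)
  finally show ?thesis using npos by (simp add: field_simps)
qed

end



context cz
begin

lemma W_mem: "\<alpha> \<in> W N \<longleftrightarrow> set \<alpha> \<subseteq> {1..n} \<and> length \<alpha> = N" by (simp add: W_def)

lemma PP_zero:
  assumes a: "\<alpha> \<in> W N" and b: "\<beta> \<in> W N" and ne: "\<alpha> \<noteq> \<beta>" and x: "x \<in> A"
  shows "\<phi> (P \<alpha> * x * P \<beta>) = 0"
proof -
  have sa: "set \<alpha> \<subseteq> {1..n}" and sb: "set \<beta> \<subseteq> {1..n}" and l: "length \<beta> = length \<alpha>"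
    using a b by (auto simp: W_mem)
  have "\<phi> ((P \<alpha> * x) * P \<beta>) = \<phi> (P \<beta> * (P \<alpha> * x))"
    by (rule trace[OF multA[OF PA[OF sa] x] PU[OF sb]])
  also have "P \<beta> * (P \<alpha> * x) = word S \<beta> * (adj (word S \<beta>) * word S \<alpha>) * (adj (word S \<alpha>) * x)"
    by (simp add: P_def mult.assoc)
  also have "\<phi> \<dots> = \<phi> (word S \<beta> * 0 * (adj (word S \<alpha>) * x))"
  proof (rule eqv_use[OF _ wA[OF sb] multA[OF adjA[OF wA[OF sa]] x]])
    have "eqv (adj (word S \<beta>) * word S \<alpha>)
      (if take (length \<beta>) \<alpha> = \<beta> then word S (drop (length \<beta>) \<alpha>) else 0)"
      by (rule word_eqv[OF sb sa]) (simp add: l)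
    moreover have "take (length \<beta>) \<alpha> \<noteq> \<beta>" using l ne by simp
    ultimately show "eqv (adj (word S \<beta>) * word S \<alpha>) 0" by simp
  qed
  finally show ?thesis by (simp add: phi0)
qed

lemma decomp:
  assumes x: "x \<in> A" shows "\<phi> x = (\<Sum>\<alpha>\<in>W N. \<phi> (P \<alpha> * x * P \<alpha>))"
proof -
  have WA: "\<And>\<alpha>. \<alpha> \<in> W N \<Longrightarrow> P \<alpha> \<in> A" by (simp add: W_mem PA)
  have "x = (\<Sum>\<alpha>\<in>W N. P \<alpha>) * x * (\<Sum>\<beta>\<in>W N. P \<beta>)" using sumP by simp
  also have "\<dots> = (\<Sum>\<alpha>\<in>W N. \<Sum>\<beta>\<in>W N. P \<alpha> * x * P \<beta>)"
    by (simp add: sum_distrib_left sum_distrib_right, rule sum.swap)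
  finally have "\<phi> x = \<phi> (\<Sum>\<alpha>\<in>W N. \<Sum>\<beta>\<in>W N. P \<alpha> * x * P \<beta>)" by simp
  also have "\<dots> = (\<Sum>\<alpha>\<in>W N. \<phi> (\<Sum>\<beta>\<in>W N. P \<alpha> * x * P \<beta>))"
    by (rule phi_sum, rule subalg_sum[OF subA]) (simp add: multA WA x)
  also have "\<dots> = (\<Sum>\<alpha>\<in>W N. \<Sum>\<beta>\<in>W N. \<phi> (P \<alpha> * x * P \<beta>))"
    by (rule sum.cong[OF refl], rule phi_sum) (simp add: multA WA x)
  also have "\<dots> = (\<Sum>\<alpha>\<in>W N. \<phi> (P \<alpha> * x * P \<alpha>))"
  proof (rule sum.cong[OF refl])
    fix \<alpha> assume a: "\<alpha> \<in> W N"
    have "(\<Sum>\<beta>\<in>W N. \<phi> (P \<alpha> * x * P \<beta>)) = \<phi> (P \<alpha> * x * P \<alpha>) + (\<Sum>\<beta>\<in>W N - {\<alpha>}. \<phi> (P \<alpha> * x * P \<beta>))"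
      by (rule sum.remove[OF finW a])
    also have "(\<Sum>\<beta>\<in>W N - {\<alpha>}. \<phi> (P \<alpha> * x * P \<beta>)) = 0"
      by (rule sum.neutral) (use PP_zero[OF a _ _ x] in blast)
    finally show "(\<Sum>\<beta>\<in>W N. \<phi> (P \<alpha> * x * P \<beta>)) = \<phi> (P \<alpha> * x * P \<alpha>)" by simp
  qed
  finally show ?thesis .
qed

definition om :: "nat list \<Rightarrow> 'a \<Rightarrow> complex" where
  "om \<alpha> y = of_nat n ^ length \<alpha> * \<phi> (word S \<alpha> * y * adj (word S \<alpha>))"

lemma om_posfun: assumes a: "set \<alpha> \<subseteq> {1..n}" shows "posfun A (om \<alpha>)"
  unfolding posfun_def
proof (intro conjI ballI allI)
  have w: "word S \<alpha> \<in> A" "adj (word S \<alpha>) \<in> A" using wA[OF a] adjA[OF wA[OF a]] by auto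
  fix x y assume x: "x \<in> A" and y: "y \<in> A"
  have "word S \<alpha> * (x + y) * adj (word S \<alpha>) = word S \<alpha> * x * adj (word S \<alpha>) + word S \<alpha> * y * adj (word S \<alpha>)"
    by (simp add: distrib_left distrib_right)
  then show "om \<alpha> (x + y) = om \<alpha> x + om \<alpha> y"
    unfolding om_def using x y w by (simp add: phi_add multA distrib_left)
next
  have w: "word S \<alpha> \<in> A" "adj (word S \<alpha>) \<in> A" using wA[OF a] adjA[OF wA[OF a]] by auto
  fix c x assume x: "x \<in> A"
  have "word S \<alpha> * cscale c x * adj (word S \<alpha>) = cscale c (word S \<alpha> * x * adj (word S \<alpha>))"
    by (simp add: cscale_mult_left cscale_mult_right)
  then show "om \<alpha> (cscale c x) = c * om \<alpha> x"
    unfolding om_def using x w by (simp add: phi_cs multA)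
next
  have w: "word S \<alpha> \<in> A" "adj (word S \<alpha>) \<in> A" using wA[OF a] adjA[OF wA[OF a]] by auto
  fix x assume x: "x \<in> A"
  have e: "word S \<alpha> * (adj x * x) * adj (word S \<alpha>) = adj (x * adj (word S \<alpha>)) * (x * adj (word S \<alpha>))"
    by (simp add: adj_mult adj_adj mult.assoc)
  have xa: "x * adj (word S \<alpha>) \<in> A" using x w by (simp add: multA)
  show "Im (om \<alpha> (adj x * x)) = 0" unfolding om_def e using posfunD(3)[OF pf xa] by simp
  show "0 \<le> Re (om \<alpha> (adj x * x))" unfolding om_def e using posfunD(4)[OF pf xa] by simp
qed

lemma om_one: assumes a: "set \<alpha> \<subseteq> {1..n}" shows "om \<alpha> 1 = 1"
proof -
  have "\<alpha> \<in> W (length \<alpha>)" using a by (simp add: W_mem)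
  then show ?thesis using phiP[of \<alpha> "length \<alpha>"] npos unfolding om_def P_def by simp
qed

lemma conj_bound:
  assumes a: "set \<alpha> \<subseteq> {1..n}" and y: "y \<in> A"
  shows "cmod (\<phi> (word S \<alpha> * y * adj (word S \<alpha>))) \<le> norm y / real n ^ length \<alpha>"
proof -
  have "cmod (om \<alpha> y) \<le> norm y" by (rule state_bound[OF subA clA om_posfun[OF a] om_one[OF a] y])
  then have "real n ^ length \<alpha> * cmod (\<phi> (word S \<alpha> * y * adj (word S \<alpha>))) \<le> norm y"
    unfolding om_def by (simp add: norm_mult norm_power)
  then show ?thesis using npos by (simp add: field_simps)
qed

end



lemma take_len_append: "take (length xs + k) (xs @ ys) = xs @ take k ys"
  by (induction xs) auto

context cz
begin

lemma vanish_bound: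
  assumes r: "\<rho> \<noteq> []" and sv: "set \<nu> \<subseteq> {1..n}" and sr: "set \<rho> \<subseteq> {1..n}" and N: "length \<nu> \<le> N"
  shows "cmod (\<phi> (word S \<nu> * word S \<rho> * adj (word S \<nu>))) \<le> 1 / real n ^ N"
proof -
  define x where "x = word S \<nu> * word S \<rho> * adj (word S \<nu>)"
  have xA: "x \<in> A" unfolding x_def using sv sr by (intro multA adjA wA)
  define t where "t \<alpha> = \<phi> (P \<alpha> * x * P \<alpha>)" for \<alpha>
  define U where "U = {\<alpha> \<in> W N. take (length \<nu>) \<alpha> = \<nu> \<and>
      take (N - length \<nu>) (\<rho> @ drop (length \<nu>) \<alpha>) = drop (length \<nu>) \<alpha>}"
  have zero: "t \<alpha> = 0" if a: "\<alpha> \<in> W N" "\<alpha> \<notin> U" for \<alpha>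
  proof -
    have sa: "set \<alpha> \<subseteq> {1..n}" and la: "length \<alpha> = N" using a by (auto simp: W_mem)
    define a where "a = word S \<alpha> * adj (word S \<alpha>) * word S \<nu> * word S \<rho>"
    have aA: "a \<in> A" unfolding a_def using sa sv sr by (intro multA adjA wA)
    have bA: "adj (word S \<alpha>) \<in> A" using sa by (intro adjA wA)
    have te: "t \<alpha> = \<phi> (a * (adj (word S \<nu>) * word S \<alpha>) * adj (word S \<alpha>))"
      unfolding t_def a_def P_def x_def by (simp add: mult.assoc)
    have we: "eqv (adj (word S \<nu>) * word S \<alpha>)
      (if take (length \<nu>) \<alpha> = \<nu> then word S (drop (length \<nu>) \<alpha>) else 0)"
      by (rule word_eqv[OF sv sa]) (simp add: la N)
    show ?thesis
    proof (cases "take (length \<nu>) \<alpha> = \<nu>")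
      case False
      then have "eqv (adj (word S \<nu>) * word S \<alpha>) 0" using we by simp
      then show ?thesis using te eqv_use[OF _ aA bA] by (simp add: phi0)
    next
      case True
      define \<gamma> where "\<gamma> = drop (length \<nu>) \<alpha>"
      have ag: "\<alpha> = \<nu> @ \<gamma>" unfolding \<gamma>_def using True by (metis append_take_drop_id)
      have lg: "length \<gamma> = N - length \<nu>" using la by (simp add: \<gamma>_def)
      have sg: "set \<gamma> \<subseteq> {1..n}" using sa ag by simp
      have ntk: "take (N - length \<nu>) (\<rho> @ \<gamma>) \<noteq> \<gamma>" using a(2) a(1) True unfolding U_def \<gamma>_def by blast
      have "eqv (adj (word S \<nu>) * word S \<alpha>) (word S \<gamma>)" using we True by (simp add: \<gamma>_def)
      then have "t \<alpha> = \<phi> (a * word S \<gamma> * adj (word S \<alpha>))" using te eqv_use[OF _ aA bA] by simp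
      also have "a * word S \<gamma> = word S \<alpha> * (adj (word S \<alpha>) * word S (\<nu> @ \<rho> @ \<gamma>))"
        unfolding a_def by (simp add: word_append mult.assoc)
      also have "\<phi> (word S \<alpha> * (adj (word S \<alpha>) * word S (\<nu> @ \<rho> @ \<gamma>)) * adj (word S \<alpha>)) =
          \<phi> (word S \<alpha> * 0 * adj (word S \<alpha>))"
      proof (rule eqv_use[OF _ wA[OF sa] bA])
        have svg: "set (\<nu> @ \<rho> @ \<gamma>) \<subseteq> {1..n}" using sv sr sg by simp
        have "eqv (adj (word S \<alpha>) * word S (\<nu> @ \<rho> @ \<gamma>))
          (if take (length \<alpha>) (\<nu> @ \<rho> @ \<gamma>) = \<alpha> then word S (drop (length \<alpha>) (\<nu> @ \<rho> @ \<gamma>)) else 0)"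
          by (rule word_eqv[OF sa svg]) (simp add: la lg)
        moreover have "take (length \<alpha>) (\<nu> @ \<rho> @ \<gamma>) \<noteq> \<alpha>"
        proof
          assume T: "take (length \<alpha>) (\<nu> @ \<rho> @ \<gamma>) = \<alpha>"
          have "length \<alpha> = length \<nu> + length \<gamma>" using ag by simp
          then have "take (length \<alpha>) (\<nu> @ (\<rho> @ \<gamma>)) = \<nu> @ take (length \<gamma>) (\<rho> @ \<gamma>)"
            by (simp only: take_len_append)
          then have "\<nu> @ take (length \<gamma>) (\<rho> @ \<gamma>) = \<nu> @ \<gamma>" using T ag by simp
          then have "take (length \<gamma>) (\<rho> @ \<gamma>) = \<gamma>" by (simp only: same_append_eq)
          then show False using ntk lg by simp
        qed
        ultimately show "eqv (adj (word S \<alpha>) * word S (\<nu> @ \<rho> @ \<gamma>)) 0" by simp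
      qed
      finally show ?thesis by (simp add: phi0)
    qed
  qed
  have UW: "U \<subseteq> W N" unfolding U_def by blast
  have finU: "finite U" using finite_subset[OF UW finW] .
  have cardU: "card U \<le> 1"
  proof -
    have "\<forall>a1\<in>U. \<forall>a2\<in>U. a1 = a2"
    proof (intro ballI)
      fix a1 a2 assume h: "a1 \<in> U" "a2 \<in> U"
      have l: "length a1 = N" "length a2 = N" using h UW by (auto simp: W_mem)
      have t1: "take (length \<nu>) a1 = \<nu>" "take (length \<nu>) a2 = \<nu>" using h by (auto simp: U_def)
      have "drop (length \<nu>) a1 = drop (length \<nu>) a2"
        by (rule prefix_uniq[OF r]) (use h l in \<open>auto simp: U_def\<close>)
      then show "a1 = a2" using t1 by (metis append_take_drop_id)
    qed
    then show ?thesis using card_le_Suc0_iff_eq[OF finU] by simp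
  qed
  have bnd: "cmod (t \<alpha>) \<le> 1 / real n ^ N" if a: "\<alpha> \<in> W N" for \<alpha>
  proof -
    have sa: "set \<alpha> \<subseteq> {1..n}" and la: "length \<alpha> = N" using a by (auto simp: W_mem)
    define z where "z = adj (word S \<alpha>) * x * word S \<alpha>"
    have zA: "z \<in> A" unfolding z_def using sa xA by (intro multA adjA wA)
    have te: "t \<alpha> = \<phi> (word S \<alpha> * z * adj (word S \<alpha>))" unfolding t_def z_def P_def by (simp add: mult.assoc)
    have nx: "norm x \<le> 1"
    proof -
      have "norm x \<le> norm (word S \<nu> * word S \<rho>) * norm (adj (word S \<nu>))" unfolding x_def by (rule norm_mult_ineq)
      also have "\<dots> \<le> norm (word S \<nu>) * norm (word S \<rho>) * norm (adj (word S \<nu>))"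
        by (intro mult_right_mono norm_mult_ineq) simp
      finally show ?thesis using norm_word[OF sv] norm_word[OF sr] by simp
    qed
    have nz: "norm z \<le> 1"
    proof -
      have "norm z \<le> norm (adj (word S \<alpha>) * x) * norm (word S \<alpha>)" unfolding z_def by (rule norm_mult_ineq)
      also have "\<dots> \<le> norm (adj (word S \<alpha>)) * norm x * norm (word S \<alpha>)"
        by (intro mult_right_mono norm_mult_ineq) simp
      finally show ?thesis using norm_word[OF sa] nx by simp
    qed
    have "cmod (t \<alpha>) \<le> norm z / real n ^ length \<alpha>" unfolding te by (rule conj_bound[OF sa zA])
    also have "\<dots> \<le> 1 / real n ^ N" using nz la npos by (simp add: divide_right_mono)
    finally show ?thesis .
  qed
  have "\<phi> x = (\<Sum>\<alpha>\<in>W N. t \<alpha>)" unfolding t_def by (rule decomp[OF xA])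
  also have "\<dots> = (\<Sum>\<alpha>\<in>U. t \<alpha>)" by (rule sum.mono_neutral_right[OF finW UW]) (use zero in blast)
  finally have "cmod (\<phi> x) = cmod (\<Sum>\<alpha>\<in>U. t \<alpha>)" by simp
  also have "\<dots> \<le> (\<Sum>\<alpha>\<in>U. cmod (t \<alpha>))" by (rule norm_sum)
  also have "\<dots> \<le> of_nat (card U) * (1 / real n ^ N)" by (rule sum_bounded_above) (use bnd UW in blast)
  also have "\<dots> \<le> 1 * (1 / real n ^ N)" using cardU by (intro mult_right_mono) auto
  finally show ?thesis unfolding x_def by simp
qed

lemma vanish:
  assumes r: "\<rho> \<noteq> []" and sv: "set \<nu> \<subseteq> {1..n}" and sr: "set \<rho> \<subseteq> {1..n}"
  shows "\<phi> (word S \<nu> * word S \<rho> * adj (word S \<nu>)) = 0"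
proof (rule ccontr)
  define c where "c = cmod (\<phi> (word S \<nu> * word S \<rho> * adj (word S \<nu>)))"
  assume "\<phi> (word S \<nu> * word S \<rho> * adj (word S \<nu>)) \<noteq> 0"
  then have c0: "0 < c" by (simp add: c_def)
  have x1: "1 / real n < 1" using n2 by simp
  obtain N0 where N0: "(1 / real n) ^ N0 < c" using real_arch_pow_inv[OF c0 x1] by blast
  define N where "N = N0 + length \<nu>"
  have "c \<le> 1 / real n ^ N" unfolding c_def by (rule vanish_bound[OF r sv sr]) (simp add: N_def)
  also have "\<dots> = (1 / real n) ^ N" by (simp add: power_one_over)
  also have "\<dots> \<le> (1 / real n) ^ N0" by (rule power_decreasing) (use n2 in \<open>auto simp: N_def\<close>)
  finally show False using N0 by simp
qed

lemma off_zero: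
  assumes sm: "set \<mu> \<subseteq> {1..n}" and sv: "set \<nu> \<subseteq> {1..n}" and ne: "\<mu> \<noteq> \<nu>" and l: "length \<nu> \<le> length \<mu>"
  shows "\<phi> (word S \<mu> * adj (word S \<nu>)) = 0"
proof (cases "take (length \<nu>) \<mu> = \<nu>")
  case True
  define \<rho> where "\<rho> = drop (length \<nu>) \<mu>"
  have m: "\<mu> = \<nu> @ \<rho>" unfolding \<rho>_def using True by (metis append_take_drop_id)
  have r: "\<rho> \<noteq> []" using m ne by auto
  have sr: "set \<rho> \<subseteq> {1..n}" using sm m by simp
  have "word S \<mu> * adj (word S \<nu>) = word S \<nu> * word S \<rho> * adj (word S \<nu>)" by (simp add: m word_append)
  then show ?thesis using vanish[OF r sv sr] by simp
next
  case False
  define x where "x = word S \<mu> * adj (word S \<nu>)"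
  have xA: "x \<in> A" unfolding x_def using sm sv by (intro multA adjA wA)
  have "x * P \<nu> = x" unfolding x_def P_def using word_iso[OF sv] by (simp add: mult.assoc[symmetric]) (simp add: mult.assoc)
  then have "\<phi> x = \<phi> (x * P \<nu>)" by simp
  also have "\<dots> = \<phi> (P \<nu> * x)" by (rule trace[OF xA PU[OF sv]])
  also have "P \<nu> * x = word S \<nu> * (adj (word S \<nu>) * word S \<mu>) * adj (word S \<nu>)"
    unfolding P_def x_def by (simp add: mult.assoc)
  also have "\<phi> \<dots> = \<phi> (word S \<nu> * 0 * adj (word S \<nu>))"
  proof (rule eqv_use[OF _ wA[OF sv] adjA[OF wA[OF sv]]])
    have "eqv (adj (word S \<nu>) * word S \<mu>)
      (if take (length \<nu>) \<mu> = \<nu> then word S (drop (length \<nu>) \<mu>) else 0)"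
      by (rule word_eqv[OF sv sm l])
    then show "eqv (adj (word S \<nu>) * word S \<mu>) 0" using False by simp
  qed
  finally show ?thesis unfolding x_def by (simp add: phi0)
qed

end



inductive_set cspan :: "'a::cstar_algebra set \<Rightarrow> 'a set" for X where
  cs0: "0 \<in> cspan X"
| csX: "x \<in> X \<Longrightarrow> x \<in> cspan X"
| csadd: "x \<in> cspan X \<Longrightarrow> y \<in> cspan X \<Longrightarrow> x + y \<in> cspan X"
| cssc: "x \<in> cspan X \<Longrightarrow> cscale c x \<in> cspan X"

lemma cspan_mult_left:
  assumes X: "\<And>x y. x \<in> X \<Longrightarrow> y \<in> X \<Longrightarrow> x * y \<in> X" and x: "x \<in> X"
  shows "y \<in> cspan X \<Longrightarrow> x * y \<in> cspan X"
proof (induction rule: cspan.induct)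
  case cs0 then show ?case by (simp add: cspan.cs0)
next
  case (csX y) then show ?case by (simp add: cspan.csX X x)
next
  case (csadd y1 y2) then show ?case by (simp add: distrib_left cspan.csadd)
next
  case (cssc y c) then show ?case by (simp add: cscale_mult_right cspan.cssc)
qed

lemma cspan_mult:
  assumes X: "\<And>x y. x \<in> X \<Longrightarrow> y \<in> X \<Longrightarrow> x * y \<in> X" and y: "y \<in> cspan X"
  shows "x \<in> cspan X \<Longrightarrow> x * y \<in> cspan X"
proof (induction rule: cspan.induct)
  case cs0 then show ?case by (simp add: cspan.cs0)
next
  case (csX x) show ?case by (rule cspan_mult_left[OF X csX.hyps y])
next
  case (csadd x1 x2) then show ?case by (simp add: distrib_right cspan.csadd)
next
  case (cssc x c) then show ?case by (simp add: cscale_mult_left cspan.cssc)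
qed

lemma cspan_adj:
  assumes X: "\<And>x. x \<in> X \<Longrightarrow> adj x \<in> X"
  shows "x \<in> cspan X \<Longrightarrow> adj x \<in> cspan X"
proof (induction rule: cspan.induct)
  case cs0 then show ?case by (simp add: cspan.cs0)
next
  case (csX x) then show ?case by (simp add: cspan.csX X)
next
  case (csadd x1 x2) then show ?case by (simp add: adj_add cspan.csadd)
next
  case (cssc x c) then show ?case by (simp add: adj_cscale cspan.cssc)
qed

lemma cspan_sub: assumes "X \<subseteq> B" "subalg B" shows "x \<in> cspan X \<Longrightarrow> x \<in> B"
proof (induction rule: cspan.induct)
  case cs0 then show ?case by (rule subalg_zero[OF assms(2)])
next
  case (csX x) then show ?case using assms(1) by blast
next
  case (csadd x1 x2) show ?case by (rule subalgD(2)[OF assms(2) csadd.IH])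
next
  case (cssc x c) show ?case by (rule subalgD(4)[OF assms(2) cssc.IH])
qed

lemma bounded_linear_cscale: "bounded_linear (cscale c :: 'a::cstar_algebra \<Rightarrow> 'a)"
proof (rule bounded_linear_intro[where K="cmod c"])
  fix x y :: 'a show "cscale c (x + y) = cscale c x + cscale c y" by (rule cscale_add_right)
next
  fix r and x :: 'a
  have "cscale c (r *\<^sub>R x) = cscale c (cscale (complex_of_real r) x)" by (simp add: cscale_of_real)
  also have "\<dots> = cscale (complex_of_real r) (cscale c x)" by (simp add: cscale_cscale mult.commute)
  finally show "cscale c (r *\<^sub>R x) = r *\<^sub>R cscale c x" by (simp add: cscale_of_real)
next
  fix x :: 'a show "norm (cscale c x) \<le> norm x * cmod c" by (simp add: norm_cscale mult.commute)
qed

lemma closure_un: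
  assumes T: "\<And>x. x \<in> T \<Longrightarrow> f x \<in> closure T" and c: "continuous_on UNIV f"
    and x: "x \<in> closure T"
  shows "f x \<in> closure T"
proof -
  have "f ` closure T \<subseteq> closure T"
    by (rule image_closure_subset[OF continuous_on_subset[OF c subset_UNIV] closed_closure])
       (rule image_subsetI, rule T)
  then show ?thesis using x by blast
qed

lemma closure_bin:
  assumes T: "\<And>x y. x \<in> T \<Longrightarrow> y \<in> T \<Longrightarrow> f x y \<in> T"
    and c1: "\<And>x. continuous_on UNIV (f x)" and c2: "\<And>y. continuous_on UNIV (\<lambda>x. f x y)"
    and x: "x \<in> closure T" and y: "y \<in> closure T"
  shows "f x y \<in> closure T"
proof -
  have s1: "f x' y' \<in> closure T" if "x' \<in> T" "y' \<in> closure T" for x' y'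
    by (rule closure_un[where f="f x'", OF _ c1 that(2)]) (rule subsetD[OF closure_subset], rule T[OF that(1)])
  show ?thesis
    by (rule closure_un[where f="\<lambda>x. f x y", OF _ c2 x]) (rule s1[OF _ y])
qed

context cz
begin

lemma val:
  assumes sm: "set \<mu> \<subseteq> {1..n}" and sv: "set \<nu> \<subseteq> {1..n}"
  shows "\<phi> (word S \<mu> * adj (word S \<nu>)) = (if \<mu> = \<nu> then 1 / of_nat n ^ length \<mu> else 0)"
proof (cases "\<mu> = \<nu>")
  case True
  have "\<mu> \<in> W (length \<mu>)" using sm by (simp add: W_mem)
  then show ?thesis using phiP[of \<mu> "length \<mu>"] True by (simp add: P_def)
next
  case False
  show ?thesis
  proof (cases "length \<nu> \<le> length \<mu>")
    case True
    then show ?thesis using off_zero[OF sm sv False True] False by simp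
  next
    case le: False
    have "\<phi> (word S \<nu> * adj (word S \<mu>)) = 0" using off_zero[OF sv sm _] False le by simp
    moreover have "\<phi> (adj (word S \<mu> * adj (word S \<nu>))) = cnj (\<phi> (word S \<mu> * adj (word S \<nu>)))"
      by (rule phi_herm) (use sm sv in \<open>simp add: multA adjA wA\<close>)
    ultimately show ?thesis using False by (simp add: adj_mult adj_adj)
  qed
qed

lemma qnf:
  assumes j: "j \<in> {1..n}" and sm: "set \<mu> \<subseteq> {1..n}" and sv: "set \<nu> \<subseteq> {1..n}"
  shows "of_nat n * \<phi> (S j * (word S \<mu> * adj (word S \<nu>)) * adj (S j)) = \<phi> (word S \<mu> * adj (word S \<nu>))"
proof -
  have e: "S j * (word S \<mu> * adj (word S \<nu>)) * adj (S j) = word S (j # \<mu>) * adj (word S (j # \<nu>))"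
    by (simp add: adj_mult mult.assoc)
  have s1: "set (j # \<mu>) \<subseteq> {1..n}" "set (j # \<nu>) \<subseteq> {1..n}" using j sm sv by auto
  show ?thesis unfolding e val[OF s1] val[OF sm sv] using npos by simp
qed

definition D where "D = closure (cspan (swords n S))"

lemma sw_mult: "x \<in> swords n S \<Longrightarrow> y \<in> swords n S \<Longrightarrow> x * y \<in> swords n S"
  by (induction rule: swords.induct) (auto simp: mult.assoc intro: swords.intros)

lemma sw_adj: "x \<in> swords n S \<Longrightarrow> adj x \<in> swords n S"
proof (induction rule: swords.induct)
  case sw_one then show ?case by (simp add: swords.sw_one)
next
  case (sw_S x i)
  have "adj (S i) * 1 \<in> swords n S" using sw_S by (intro swords.intros)
  then show ?case using sw_mult[OF sw_S.IH] by (simp add: adj_mult)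
next
  case (sw_Sa x i)
  have "S i * 1 \<in> swords n S" using sw_Sa by (intro swords.intros)
  then show ?case using sw_mult[OF sw_Sa.IH] by (simp add: adj_mult adj_adj)
qed

lemma D_subalg: "subalg D"
  unfolding subalg_def D_def
proof (intro conjI ballI allI)
  show "1 \<in> closure (cspan (swords n S))"
    using closure_subset cspan.csX[OF swords.sw_one] by blast
  fix x y assume x: "x \<in> closure (cspan (swords n S))" and y: "y \<in> closure (cspan (swords n S))"
  show "x + y \<in> closure (cspan (swords n S))"
    by (rule closure_bin[where f="(+)", OF cspan.csadd _ _ x y]) (auto intro!: continuous_intros)
  show "x * y \<in> closure (cspan (swords n S))"
    by (rule closure_bin[where f="(*)", OF cspan_mult[OF sw_mult] _ _ x y]) (auto intro!: continuous_intros)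
next
  fix c x assume x: "x \<in> closure (cspan (swords n S))"
  show "cscale c x \<in> closure (cspan (swords n S))"
    by (rule closure_un[OF _ linear_continuous_on[OF bounded_linear_cscale] x])
       (rule subsetD[OF closure_subset], rule cspan.cssc)
next
  fix x assume x: "x \<in> closure (cspan (swords n S))"
  show "adj x \<in> closure (cspan (swords n S))"
    by (rule closure_un[OF _ continuous_adj x]) (rule subsetD[OF closure_subset], rule cspan_adj[OF sw_adj])
qed

lemma A_sub_D: "A \<subseteq> D"
  unfolding cuntz_alg_def
proof (rule cg_minimal[OF _ D_subalg])
  show "closed D" unfolding D_def by simp
  show "S ` {1..n} \<subseteq> D"
  proof
    fix x assume "x \<in> S ` {1..n}"
    then obtain i where i: "i \<in> {1..n}" "x = S i" by blast
    have "S i * 1 \<in> swords n S" using i by (intro swords.intros)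
    then show "x \<in> D" unfolding D_def using i closure_subset cspan.csX by fastforce
  qed
qed

lemma mainQ:
  assumes j: "j \<in> {1..n}" and x: "x \<in> A"
  shows "of_nat n * \<phi> (S j * x * adj (S j)) = \<phi> x"
proof -
  define Z where "Z = {x \<in> A. of_nat n * \<phi> (S j * x * adj (S j)) - \<phi> x = 0}"
  have cphi: "continuous_on A \<phi>" by (rule state_continuous[OF subA clA pf phi1])
  have c1: "continuous_on A (\<lambda>x. \<phi> (S j * x * adj (S j)))"
    by (rule continuous_on_compose2[OF cphi]) (auto intro!: continuous_intros multA SA SaA j)
  have "closed Z" unfolding Z_def
    by (rule continuous_closed_preimage_constant[OF _ clA]) (intro continuous_intros c1 cphi)
  have base: "x \<in> cspan (swords n S) \<Longrightarrow> x \<in> Z" for x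
  proof (induction rule: cspan.induct)
    case cs0
    then show ?case by (simp add: Z_def zeroA phi0)
  next
    case (csX x)
    have xA: "x \<in> A" by (rule swordsA[OF csX])
    have sjA: "S j \<in> A" "adj (S j) \<in> A" using j by (auto intro: SA SaA)
    from swords_nf[OF csX] show ?case
    proof
      assume "\<exists>\<mu> \<nu>. set \<mu> \<subseteq> {1..n} \<and> set \<nu> \<subseteq> {1..n} \<and> eqv x (word S \<mu> * adj (word S \<nu>))"
      then obtain \<mu> \<nu> where mn: "set \<mu> \<subseteq> {1..n}" "set \<nu> \<subseteq> {1..n}" "eqv x (word S \<mu> * adj (word S \<nu>))" by blast
      have "\<phi> (S j * x * adj (S j)) = \<phi> (S j * (word S \<mu> * adj (word S \<nu>)) * adj (S j))"
        by (rule eqv_use[OF mn(3) sjA])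
      moreover have "\<phi> x = \<phi> (word S \<mu> * adj (word S \<nu>))" by (rule eqv_phi[OF mn(3)])
      ultimately show ?thesis using qnf[OF j mn(1,2)] xA by (simp add: Z_def)
    next
      assume e: "eqv x 0"
      have "\<phi> (S j * x * adj (S j)) = \<phi> (S j * 0 * adj (S j))" by (rule eqv_use[OF e sjA])
      moreover have "\<phi> x = \<phi> 0" by (rule eqv_phi[OF e])
      ultimately show ?thesis using xA by (simp add: Z_def phi0)
    qed
  next
    case (csadd x y)
    have xy: "x \<in> A" "y \<in> A" using csadd by (auto simp: Z_def)
    have m: "S j * x * adj (S j) \<in> A" "S j * y * adj (S j) \<in> A" using xy j by (auto intro!: multA SA SaA)
    have "S j * (x + y) * adj (S j) = S j * x * adj (S j) + S j * y * adj (S j)"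
      by (simp add: distrib_left distrib_right)
    then show ?case using csadd xy m by (simp add: Z_def addA phi_add algebra_simps)
  next
    case (cssc x c)
    have xA: "x \<in> A" using cssc by (auto simp: Z_def)
    have m: "S j * x * adj (S j) \<in> A" using xA j by (auto intro!: multA SA SaA)
    have "S j * cscale c x * adj (S j) = cscale c (S j * x * adj (S j))"
      by (simp add: cscale_mult_left cscale_mult_right)
    then show ?case using cssc xA m by (simp add: Z_def csA phi_cs algebra_simps)
  qed
  have "D \<subseteq> Z" unfolding D_def by (rule closure_minimal) (use base \<open>closed Z\<close> in auto)
  then have "x \<in> Z" using A_sub_D x by blast
  then show ?thesis by (simp add: Z_def)
qed

end



context cz
begin

lemma mainQ': "j \<in> {1..n} \<Longrightarrow> x \<in> A \<Longrightarrow> \<phi> (S j * x * adj (S j)) = \<phi> x / of_nat n"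
  using mainQ[of j x] npos by (simp add: field_simps)

lemma kms:
  assumes i: "i \<in> {1..n}" and a: "a \<in> A"
  shows "\<phi> (a * adj (S i)) = \<phi> (adj (S i) * a) / of_nat n"
proof -
  have bU: "S i * adj (S i) \<in> uhf_alg n S" using uhfI[of "[i]" "[i]"] i by simp
  have aS: "a * adj (S i) \<in> A" using a i by (intro multA SaA)
  have "a * adj (S i) = (a * adj (S i)) * (S i * adj (S i))"
    using iso[OF i] by (simp add: mult.assoc[symmetric]) (simp add: mult.assoc)
  then have "\<phi> (a * adj (S i)) = \<phi> ((a * adj (S i)) * (S i * adj (S i)))" by simp
  also have "\<dots> = \<phi> ((S i * adj (S i)) * (a * adj (S i)))" by (rule trace[OF aS bU])
  also have "(S i * adj (S i)) * (a * adj (S i)) = S i * (adj (S i) * a) * adj (S i)" by (simp add: mult.assoc)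
  also have "\<phi> \<dots> = \<phi> (adj (S i) * a) / of_nat n" by (rule mainQ'[OF i]) (intro multA SaA i a)
  finally show ?thesis .
qed

theorem main:
  "(\<forall>x\<in>A. \<phi> (Phi_map n S x) = \<phi> x)
 \<and> (\<forall>x\<in>A. \<forall>y\<in>A. \<phi> (adj y * Phi_map n S x) = \<phi> (adj (Psi_map n S y) * x))"
proof (intro conjI ballI)
  fix x assume x: "x \<in> A"
  have "\<phi> (Phi_map n S x) = (\<Sum>j=1..n. \<phi> (S j * x * adj (S j)))"
    unfolding Phi_map_def by (rule phi_sum) (intro multA SA SaA x; simp)
  also have "\<dots> = (\<Sum>j=1..n. \<phi> x / of_nat n)" by (rule sum.cong[OF refl]) (rule mainQ'[OF _ x])
  also have "\<dots> = \<phi> x" using npos by simp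
  finally show "\<phi> (Phi_map n S x) = \<phi> x" .
next
  fix x y assume x: "x \<in> A" and y: "y \<in> A"
  have ya: "adj y \<in> A" using y by (rule adjA)
  have e: "adj y * Phi_map n S x = (\<Sum>i=1..n. (adj y * S i * x) * adj (S i))"
    unfolding Phi_map_def by (simp add: sum_distrib_left mult.assoc)
  have "\<phi> (adj y * Phi_map n S x) = (\<Sum>i=1..n. \<phi> ((adj y * S i * x) * adj (S i)))"
    unfolding e by (rule phi_sum) (intro multA SA SaA x ya; simp)
  also have "\<dots> = (\<Sum>i=1..n. \<phi> (adj (S i) * adj y * S i * x) / of_nat n)"
  proof (rule sum.cong[OF refl])
    fix i assume i: "i \<in> {1..n}"
    show "\<phi> ((adj y * S i * x) * adj (S i)) = \<phi> (adj (S i) * adj y * S i * x) / of_nat n"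
      using kms[OF i, of "adj y * S i * x"] i x ya by (simp add: multA SA mult.assoc)
  qed
  also have "\<dots> = \<phi> (adj (Psi_map n S y) * x)"
  proof -
    have "adj (Psi_map n S y) = cscale (1 / of_nat n) (\<Sum>i=1..n. adj (S i) * adj y * S i)"
      unfolding Psi_map_def by (simp add: adj_cscale adj_sum adj_mult adj_adj mult.assoc)
    then have "adj (Psi_map n S y) * x = cscale (1 / of_nat n) (\<Sum>i=1..n. adj (S i) * adj y * S i * x)"
      by (simp add: cscale_mult_left sum_distrib_right)
    moreover have "(\<Sum>i=1..n. adj (S i) * adj y * S i * x) \<in> A"
      by (rule subalg_sum[OF subA]) (intro multA SA SaA x ya; simp)
    moreover have "\<phi> (\<Sum>i=1..n. adj (S i) * adj y * S i * x) = (\<Sum>i=1..n. \<phi> (adj (S i) * adj y * S i * x))"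
      by (rule phi_sum) (intro multA SA SaA x ya; simp)
    ultimately have "\<phi> (adj (Psi_map n S y) * x) = (1 / of_nat n) * (\<Sum>i=1..n. \<phi> (adj (S i) * adj y * S i * x))"
      by (simp add: phi_cs)
    then show ?thesis by (simp add: sum_divide_distrib)
  qed
  finally show "\<phi> (adj y * Phi_map n S x) = \<phi> (adj (Psi_map n S y) * x)" .
qed

end

theorem mainTheorem5:
  fixes n :: nat and S :: "nat \<Rightarrow> 'a::cstar_algebra" and \<phi> :: "'a \<Rightarrow> complex"
  assumes "n \<ge> 2"
    and "cuntz_family n S"
    and "is_state_on (cuntz_alg n S) \<phi>"
    and "\<forall>a\<in>cuntz_alg n S. \<forall>b\<in>uhf_alg n S. \<phi> (a * b) = \<phi> (b * a)"
  shows "(\<forall>x\<in>cuntz_alg n S. \<phi> (Phi_map n S x) = \<phi> x)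
       \<and> (\<forall>x\<in>cuntz_alg n S. \<forall>y\<in>cuntz_alg n S.
            \<phi> (adj y * Phi_map n S x) = \<phi> (adj (Psi_map n S y) * x))"
proof -
  interpret cz n S \<phi> using assms by unfold_locales
  show ?thesis by (rule main)
qed


end
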